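(* If $X$ is a uniformly joinable uniform space and $x_0\in X$, then $\mathrm{pro}\text{-}\pi_1(GP(X,x_0),y_0)$ is trivial, where $y_0$ is the constant generalized path at $x_0$.
   Context: $R(Z,E)$ is the Rips complex of a uniform space $Z$ (vertex set $Z$, simplices the finite $F$ with $F\times F\subset E$); $e(x,y)$ is the edge-path. $\mathrm{pro}\text{-}\pi_1(Z,z)=\{\pi_1(R(Z,E),z)\}_E$ (reverse inclusion, inclusion-induced maps); it is trivial if for every $E$ there is $F\subset E$ with $\pi_1(R(Z,F),z)\to\pi_1(R(Z,E),z)$ trivial. Paths $c,d$ in $R(X,E)$ with end-points in $X$ are $E$-homotopic if their initial points $x_c,x_d$ and terminal points $y_c,y_d$ satisfy $(x_c,x_d),(y_c,y_d)\in E$ and $c\simeq e(x_c,x_d)\ast d\ast e(y_d,y_c)$ rel. end-points in $R(X,E)$. A generalized path from $x$ to $y$ is a family $\{[c_E]\}_E$ of homotopy classes rel. end-points of paths from $x$ to $y$ in $R(X,E)$ with $c_F\simeq c_E$ in $R(X,E)$ for $F\subset E$; it is $F$-short if $(x,y)\in F$ and $c_F\simeq e(x,y)$ in $R(X,F)$. $GP(X,x_0)$ is the set of generalized paths starting at $x_0$ with the uniform structure whose base consists of the sets $F^\ast$ of pairs $(c,d)$ with $c_F$ $F$-homotopic to $d_F$. $X$ is uniformly joinable if for each entourage $E$ there is an entourage $F$ such that any $(x,y)\in F$ are joined by an $E$-short generalized path. *)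

theory Defs
  imports Complex_Main
begin

definition rips_simplex :: "'v set \<Rightarrow> ('v \<times> 'v) set \<Rightarrow> 'v set \<Rightarrow> bool" where
  "rips_simplex Z E S \<longleftrightarrow> finite S \<and> S \<noteq> {} \<and> S \<subseteq> Z \<and> S \<times> S \<subseteq> E"

definition edge_path :: "'v set \<Rightarrow> ('v \<times> 'v) set \<Rightarrow> 'v list \<Rightarrow> bool" where
  "edge_path Z E c \<longleftrightarrow> c \<noteq> [] \<and> set c \<subseteq> Z \<and>
     (\<forall>i. Suc i < length c \<longrightarrow> rips_simplex Z E {c ! i, c ! Suc i})"

definition ep_move :: "'v set \<Rightarrow> ('v \<times> 'v) set \<Rightarrow> 'v list \<Rightarrow> 'v list \<Rightarrow> bool" where
  "ep_move Z E xs ys \<longleftrightarrow>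
     (\<exists>as u v w bs. xs = as @ [u, v, w] @ bs \<and> ys = as @ [u, w] @ bs \<and> rips_simplex Z E {u, v, w}) \<or>
     (\<exists>as u bs. xs = as @ [u, u] @ bs \<and> ys = as @ [u] @ bs \<and> rips_simplex Z E {u})"

text \<open>Homotopy rel. end-points of edge paths in R(Z,E) (edge-path equivalence).\<close>
definition ep_equiv :: "'v set \<Rightarrow> ('v \<times> 'v) set \<Rightarrow> 'v list \<Rightarrow> 'v list \<Rightarrow> bool" where
  "ep_equiv Z E c d \<longleftrightarrow> edge_path Z E c \<and>
     (\<lambda>a b. ep_move Z E a b \<or> ep_move Z E b a)\<^sup>*\<^sup>* c d"

definition ep_class :: "'v set \<Rightarrow> ('v \<times> 'v) set \<Rightarrow> 'v list \<Rightarrow> 'v list set" where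
  "ep_class Z E c = {d. ep_equiv Z E c d}"

text \<open>pro-\<pi>_1(Z,z) is trivial, for a uniform structure given by its set U of entourages:
  for every E there is F \<subseteq> E such that \<pi>_1(R(Z,F),z) \<rightarrow> \<pi>_1(R(Z,E),z) is trivial.\<close>
definition pro_pi1_trivial :: "'v set \<Rightarrow> ('v \<times> 'v) set set \<Rightarrow> 'v \<Rightarrow> bool" where
  "pro_pi1_trivial Z U z \<longleftrightarrow>
     (\<forall>E\<in>U. \<exists>F\<in>U. F \<subseteq> E \<and>
        (\<forall>c. edge_path Z F c \<and> hd c = z \<and> last c = z \<longrightarrow> ep_equiv Z E c [z]))"

definition E_homotopic :: "'v set \<Rightarrow> ('v \<times> 'v) set \<Rightarrow> 'v list \<Rightarrow> 'v list \<Rightarrow> bool" where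
  "E_homotopic Z E c d \<longleftrightarrow> edge_path Z E c \<and> edge_path Z E d \<and>
     (hd c, hd d) \<in> E \<and> (last c, last d) \<in> E \<and>
     edge_path Z E (hd c # d @ [last c]) \<and> ep_equiv Z E c (hd c # d @ [last c])"

definition ents :: "('a::uniform_space \<times> 'a) set set" where
  "ents = {E. eventually (\<lambda>p. p \<in> E) uniformity}"

type_synonym 'a gpath = "('a \<times> 'a) set \<Rightarrow> 'a list set"

text \<open>A generalized path from x to y: for each entourage E a homotopy class (rel. end-points)
  of edge paths from x to y in R(X,E), compatible under inclusion; set to {} off entourages.\<close>
definition gen_path :: "'a::uniform_space \<Rightarrow> 'a \<Rightarrow> 'a gpath \<Rightarrow> bool" where
  "gen_path x y g \<longleftrightarrow>
     (\<forall>E. E \<notin> ents \<longrightarrow> g E = {}) \<and>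
     (\<forall>E\<in>ents. \<exists>c. edge_path UNIV E c \<and> hd c = x \<and> last c = y \<and> g E = ep_class UNIV E c) \<and>
     (\<forall>E\<in>ents. \<forall>F\<in>ents. F \<subseteq> E \<longrightarrow> g F \<subseteq> g E)"

definition short_gen_path :: "('a::uniform_space \<times> 'a) set \<Rightarrow> 'a \<Rightarrow> 'a \<Rightarrow> 'a gpath \<Rightarrow> bool" where
  "short_gen_path F x y g \<longleftrightarrow> (x, y) \<in> F \<and> [x, y] \<in> g F"

definition uniformly_joinable :: "'a::uniform_space itself \<Rightarrow> bool" where
  "uniformly_joinable _ \<longleftrightarrow>
     (\<forall>E\<in>(ents :: ('a \<times> 'a) set set). \<exists>F\<in>ents. \<forall>x y. (x, y) \<in> F \<longrightarrow>
        (\<exists>g. gen_path x y g \<and> short_gen_path E x y g))"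

definition GP :: "'a::uniform_space \<Rightarrow> 'a gpath set" where
  "GP x0 = {g. \<exists>y. gen_path x0 y g}"

definition GP_star :: "'a::uniform_space \<Rightarrow> ('a \<times> 'a) set \<Rightarrow> ('a gpath \<times> 'a gpath) set" where
  "GP_star x0 F = {(g, h). g \<in> GP x0 \<and> h \<in> GP x0 \<and>
      (\<exists>c\<in>g F. \<exists>d\<in>h F. E_homotopic UNIV F c d)}"

text \<open>Entourages of GP(X,x0): the uniformity generated by the base {F*}.\<close>
definition GP_ents :: "'a::uniform_space \<Rightarrow> ('a gpath \<times> 'a gpath) set set" where
  "GP_ents x0 = {W. W \<subseteq> GP x0 \<times> GP x0 \<and> (\<exists>F\<in>ents. GP_star x0 F \<subseteq> W)}"

definition const_gp :: "'a::uniform_space \<Rightarrow> 'a gpath" where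
  "const_gp x0 = (\<lambda>E. if E \<in> ents then ep_class UNIV E [x0] else {})"

end

theory Submission
  imports Defs
begin

lemma rs_sub: "rips_simplex Z E S \<Longrightarrow> S' \<subseteq> S \<Longrightarrow> S' \<noteq> {} \<Longrightarrow> rips_simplex Z E S'"
  unfolding rips_simplex_def by (auto intro: finite_subset)

lemma rs_mono: "rips_simplex Z E S \<Longrightarrow> E \<subseteq> E' \<Longrightarrow> rips_simplex Z E' S"
  unfolding rips_simplex_def by auto

lemma rs1: "rips_simplex Z E {a} \<longleftrightarrow> a \<in> Z \<and> (a,a)\<in>E"
  unfolding rips_simplex_def by auto

lemma rs2: "rips_simplex Z E {a,b} \<longleftrightarrow> a \<in> Z \<and> b \<in> Z \<and> (a,a)\<in>E \<and> (a,b)\<in>E \<and> (b,a)\<in>E \<and> (b,b)\<in>E"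
  unfolding rips_simplex_def by auto

lemma rs3: "rips_simplex Z E {a,b,c} \<longleftrightarrow> a \<in> Z \<and> b \<in> Z \<and> c\<in>Z \<and> (a,a)\<in>E \<and> (a,b)\<in>E \<and> (a,c)\<in>E \<and> (b,a)\<in>E \<and> (b,b)\<in>E \<and> (b,c)\<in>E \<and> (c,a)\<in>E \<and> (c,b)\<in>E \<and> (c,c)\<in>E"
  unfolding rips_simplex_def by auto

lemma ep_ne: "edge_path Z E c \<Longrightarrow> c \<noteq> []"
  unfolding edge_path_def by auto

lemma ep1: "edge_path Z E [a] \<longleftrightarrow> a \<in> Z"
  unfolding edge_path_def by auto

lemma ep2: "edge_path Z E (a#b#r) \<longleftrightarrow> a \<in> Z \<and> rips_simplex Z E {a,b} \<and> edge_path Z E (b#r)"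
proof
  assume h: "edge_path Z E (a#b#r)"
  then have s: "\<And>i. Suc i < Suc (Suc (length r)) \<Longrightarrow> rips_simplex Z E {(a#b#r) ! i, (a#b#r) ! Suc i}"
    and z: "set (a#b#r) \<subseteq> Z" unfolding edge_path_def by auto
  have "rips_simplex Z E {a,b}" using s[of 0] by simp
  moreover have "edge_path Z E (b#r)" unfolding edge_path_def
  proof (intro conjI allI impI)
    show "set (b#r) \<subseteq> Z" using z by auto
    fix i assume "Suc i < length (b#r)"
    then show "rips_simplex Z E {(b#r) ! i, (b#r) ! Suc i}" using s[of "Suc i"] by simp
  qed simp
  ultimately show "a \<in> Z \<and> rips_simplex Z E {a,b} \<and> edge_path Z E (b#r)" using z by simp
next
  assume h: "a \<in> Z \<and> rips_simplex Z E {a,b} \<and> edge_path Z E (b#r)"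
  show "edge_path Z E (a#b#r)" unfolding edge_path_def
  proof (intro conjI allI impI)
    show "set (a#b#r) \<subseteq> Z" using h unfolding edge_path_def by auto
    fix i assume i: "Suc i < length (a#b#r)"
    show "rips_simplex Z E {(a#b#r) ! i, (a#b#r) ! Suc i}"
    proof (cases i)
      case 0 then show ?thesis using h by simp
    next
      case (Suc j) then show ?thesis using h i unfolding edge_path_def by auto
    qed
  qed simp
qed

lemma ep_app: "xs \<noteq> [] \<Longrightarrow> ys \<noteq> [] \<Longrightarrow> edge_path Z E (xs@ys) \<longleftrightarrow> edge_path Z E xs \<and> edge_path Z E ys \<and> rips_simplex Z E {last xs, hd ys}"
proof (induction xs)
  case Nil then show ?case by simp
next
  case (Cons x xs)
  show ?case
  proof (cases xs)
    case Nil
    obtain y ys' where "ys = y # ys'" using Cons.prems by (cases ys) auto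
    then show ?thesis using Nil by (auto simp add: ep1 ep2)
  next
    case (Cons x' xs'')
    then show ?thesis using Cons.IH Cons.prems by (auto simp: ep2)
  qed
qed

lemma ep_app_l: "ys \<noteq> [] \<Longrightarrow> edge_path Z E (as@ys) \<longleftrightarrow> (as = [] \<or> edge_path Z E as \<and> rips_simplex Z E {last as, hd ys}) \<and> edge_path Z E ys"
  by (cases "as = []") (auto simp: ep_app)

lemma ep_app_r: "ys \<noteq> [] \<Longrightarrow> edge_path Z E (ys@bs) \<longleftrightarrow> edge_path Z E ys \<and> (bs = [] \<or> rips_simplex Z E {last ys, hd bs} \<and> edge_path Z E bs)"
  by (cases "bs = []") (auto simp: ep_app)

lemma ep_mono: "edge_path Z E c \<Longrightarrow> E \<subseteq> E' \<Longrightarrow> edge_path Z E' c"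
  unfolding edge_path_def using rs_mono by blast

lemma move_ep: "ep_move Z E xs ys \<Longrightarrow> edge_path Z E xs \<longleftrightarrow> edge_path Z E ys"
  unfolding ep_move_def
  by (auto simp: ep_app_l ep_app_r ep1 ep2 rs1 rs2 rs3)

lemma move_hdlast: "ep_move Z E xs ys \<Longrightarrow> hd xs = hd ys \<and> last xs = last ys"
  unfolding ep_move_def by (auto simp: hd_append last_append)

lemma move_lift: "ep_move Z E xs ys \<Longrightarrow> ep_move Z E (as@xs@bs) (as@ys@bs)"
  unfolding ep_move_def
  apply (elim disjE exE conjE)
   apply (rule disjI1)
   apply (rule_tac x="as@asa" in exI, auto)[1]
  apply (rule disjI2)
  apply (rule_tac x="as@asa" in exI, auto)
  done

lemma move_mono: "ep_move Z E xs ys \<Longrightarrow> E \<subseteq> E' \<Longrightarrow> ep_move Z E' xs ys"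
  unfolding ep_move_def using rs_mono by metis


abbreviation R :: "'v set \<Rightarrow> ('v \<times> 'v) set \<Rightarrow> 'v list \<Rightarrow> 'v list \<Rightarrow> bool" where
  "R Z E \<equiv> (\<lambda>a b. ep_move Z E a b \<or> ep_move Z E b a)"

lemma rt_ep: "(R Z E)\<^sup>*\<^sup>* c d \<Longrightarrow> edge_path Z E c \<Longrightarrow> edge_path Z E d"
  by (induction rule: rtranclp_induct) (auto simp: move_ep)

lemma rt_hdlast: "(R Z E)\<^sup>*\<^sup>* c d \<Longrightarrow> hd c = hd d \<and> last c = last d"
  by (induction rule: rtranclp_induct) (auto dest: move_hdlast)

lemma eq_refl: "edge_path Z E c \<Longrightarrow> ep_equiv Z E c c"
  unfolding ep_equiv_def by auto

lemma eq_ep1: "ep_equiv Z E c d \<Longrightarrow> edge_path Z E c"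
  unfolding ep_equiv_def by auto

lemma eq_ep2: "ep_equiv Z E c d \<Longrightarrow> edge_path Z E d"
  unfolding ep_equiv_def using rt_ep by blast

lemma eq_hd: "ep_equiv Z E c d \<Longrightarrow> hd c = hd d"
  unfolding ep_equiv_def using rt_hdlast by blast

lemma eq_last: "ep_equiv Z E c d \<Longrightarrow> last c = last d"
  unfolding ep_equiv_def using rt_hdlast by blast

lemma eq_trans: "ep_equiv Z E c d \<Longrightarrow> ep_equiv Z E d e \<Longrightarrow> ep_equiv Z E c e"
  unfolding ep_equiv_def by auto

lemma rt_sym: "(R Z E)\<^sup>*\<^sup>* c d \<Longrightarrow> (R Z E)\<^sup>*\<^sup>* d c"
proof (induction rule: rtranclp_induct)
  case base then show ?case by simp
next
  case (step y z)
  show ?case by (rule converse_rtranclp_into_rtranclp[of "R Z E", OF _ step.IH]) (use step in auto)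
qed

lemma eq_sym: "ep_equiv Z E c d \<Longrightarrow> ep_equiv Z E d c"
  unfolding ep_equiv_def using rt_ep rt_sym by blast

lemma rt_lift: "(R Z E)\<^sup>*\<^sup>* c d \<Longrightarrow> (R Z E)\<^sup>*\<^sup>* (as@c@bs) (as@d@bs)"
proof (induction rule: rtranclp_induct)
  case base then show ?case by simp
next
  case (step y z)
  show ?case by (rule rtranclp.rtrancl_into_rtrancl[of "R Z E", OF step.IH]) (use step move_lift in blast)
qed

lemma eq_cong: "ep_equiv Z E c d \<Longrightarrow> edge_path Z E (as@c@bs) \<Longrightarrow> ep_equiv Z E (as@c@bs) (as@d@bs)"
  unfolding ep_equiv_def using rt_lift by blast

lemma rt_mono: "(R Z E)\<^sup>*\<^sup>* c d \<Longrightarrow> E \<subseteq> E' \<Longrightarrow> (R Z E')\<^sup>*\<^sup>* c d"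
proof (induction rule: rtranclp_induct)
  case base then show ?case by simp
next
  case (step y z)
  show ?case by (rule rtranclp.rtrancl_into_rtrancl[of "R Z E'", OF step.IH[OF step.prems]]) (use step move_mono in blast)
qed

lemma eq_mono: "ep_equiv Z E c d \<Longrightarrow> E \<subseteq> E' \<Longrightarrow> ep_equiv Z E' c d"
  unfolding ep_equiv_def using rt_mono ep_mono by blast

lemma eq_move: "edge_path Z E xs \<Longrightarrow> ep_move Z E xs ys \<Longrightarrow> ep_equiv Z E xs ys"
  unfolding ep_equiv_def by auto

lemma eq_move_rev: "edge_path Z E ys \<Longrightarrow> ep_move Z E xs ys \<Longrightarrow> ep_equiv Z E ys xs"
  unfolding ep_equiv_def by auto

lemma class_eq: "ep_equiv Z E c d \<Longrightarrow> ep_class Z E c = ep_class Z E d"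
  unfolding ep_class_def using eq_sym eq_trans by blast

lemma class_mem: "d \<in> ep_class Z E c \<longleftrightarrow> ep_equiv Z E c d"
  unfolding ep_class_def by simp

lemma move1: "rips_simplex Z E {u,v,w} \<Longrightarrow> ep_move Z E (as@[u,v,w]@bs) (as@[u,w]@bs)"
  unfolding ep_move_def by blast

lemma move2: "rips_simplex Z E {u} \<Longrightarrow> ep_move Z E (as@[u,u]@bs) (as@[u]@bs)"
  unfolding ep_move_def by blast

lemma bt0: "rips_simplex Z E {u,v} \<Longrightarrow> ep_equiv Z E [u,v,u] [u]"
proof -
  assume h: "rips_simplex Z E {u,v}"
  have e: "edge_path Z E [u,v,u]" using h by (auto simp: ep1 ep2 rs2)
  have "ep_move Z E ([]@[u,v,u]@[]) ([]@[u,u]@[])" by (rule move1) (use h in \<open>auto simp: rs2 rs3\<close>)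
  then have 1: "ep_equiv Z E [u,v,u] [u,u]" using e eq_move by fastforce
  have "ep_move Z E ([]@[u,u]@[]) ([]@[u]@[])" by (rule move2) (use h in \<open>auto simp: rs2 rs1\<close>)
  then have 2: "ep_equiv Z E [u,u] [u]" using 1 eq_ep2 eq_move by fastforce
  show ?thesis using 1 2 eq_trans by blast
qed

lemma bt: "rips_simplex Z E {u,v} \<Longrightarrow> edge_path Z E (as@[u,v,u]@bs) \<Longrightarrow> ep_equiv Z E (as@[u,v,u]@bs) (as@[u]@bs)"
proof -
  assume h1: "rips_simplex Z E {u,v}" and h2: "edge_path Z E (as@[u,v,u]@bs)"
  show ?thesis by (rule eq_cong[OF bt0[OF h1] h2])
qed

lemma dup: "(u,u) \<in> E \<Longrightarrow> edge_path Z E (as@[u]@bs) \<Longrightarrow> ep_equiv Z E (as@[u]@bs) (as@[u,u]@bs)"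
proof -
  assume a: "(u,u) \<in> E" "edge_path Z E (as@[u]@bs)"
  then have "u \<in> Z" unfolding edge_path_def by auto
  then have "ep_move Z E (as@[u,u]@bs) (as@[u]@bs)" using a by (intro move2) (simp add: rs1)
  then show ?thesis using a eq_move_rev by blast
qed

lemma ep_concat: "edge_path Z E c \<Longrightarrow> edge_path Z E d \<Longrightarrow> last c = hd d \<Longrightarrow> edge_path Z E (c @ tl d)"
proof -
  assume c: "edge_path Z E c" and d: "edge_path Z E d" and l: "last c = hd d"
  obtain a r where dr: "d = a # r" using d ep_ne by (cases d) auto
  show ?thesis
  proof (cases r)
    case Nil then show ?thesis using c dr by simp
  next
    case (Cons b r')
    then show ?thesis using c d dr l ep_ne[OF c] by (simp add: ep_app ep2)
  qed
qed

lemma concat_butlast: "c \<noteq> [] \<Longrightarrow> d \<noteq> [] \<Longrightarrow> last c = hd d \<Longrightarrow> c @ tl d = butlast c @ d"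
  by (metis append.assoc append_Cons append_butlast_last_id list.collapse self_append_conv2)

lemma concat_cong: "ep_equiv Z E c c' \<Longrightarrow> ep_equiv Z E d d' \<Longrightarrow> last c = hd d \<Longrightarrow> ep_equiv Z E (c @ tl d) (c' @ tl d')"
proof -
  assume cc: "ep_equiv Z E c c'" and dd: "ep_equiv Z E d d'" and l: "last c = hd d"
  have ec: "edge_path Z E c" "edge_path Z E c'" using cc eq_ep1 eq_ep2 by blast+
  have ed: "edge_path Z E d" "edge_path Z E d'" using dd eq_ep1 eq_ep2 by blast+
  have l': "last c' = hd d" "last c' = hd d'" using l eq_last[OF cc] eq_hd[OF dd] by auto
  have 1: "ep_equiv Z E (c @ tl d) (c' @ tl d)"
    using eq_cong[OF cc, of "[]" "tl d"] ep_concat[OF ec(1) ed(1) l] by simp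
  have 2: "ep_equiv Z E (butlast c' @ d) (butlast c' @ d')"
    using eq_cong[OF dd, of "butlast c'" "[]"] ep_concat[OF ec(2) ed(1) l'(1)]
      concat_butlast[OF ep_ne[OF ec(2)] ep_ne[OF ed(1)] l'(1)] by simp
  show ?thesis using 1 2 concat_butlast[OF ep_ne[OF ec(2)] ep_ne[OF ed(1)] l'(1)]
      concat_butlast[OF ep_ne[OF ec(2)] ep_ne[OF ed(2)] l'(2)] eq_trans by metis
qed


lemma ents_refl: "E \<in> ents \<Longrightarrow> (x,x) \<in> E"
  unfolding ents_def using uniformity_refl[of "\<lambda>p. p \<in> E"] by auto

lemma ents_int: "E \<in> ents \<Longrightarrow> F \<in> ents \<Longrightarrow> E \<inter> F \<in> ents"
  unfolding ents_def using eventually_conj by auto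

lemma EH_crit:
  assumes "E \<in> ents" "edge_path UNIV E c" "edge_path UNIV E d" "hd c = hd d"
    "(last c, last d) \<in> E" "(last d, last c) \<in> E" "ep_equiv UNIV E c (d@[last c])"
  shows "E_homotopic UNIV E c d"
proof -
  have dne: "d \<noteq> []" using assms(3) ep_ne by blast
  have e1: "edge_path UNIV E (d@[last c])" using assms(7) eq_ep2 by blast
  have dd1: "[]@[hd d]@(tl d@[last c]) = d@[last c]" using dne by simp
  have dd2: "[]@[hd d, hd d]@(tl d@[last c]) = hd c # d@[last c]" using dne assms(4) by simp
  have "ep_equiv UNIV E ([]@[hd d]@(tl d@[last c])) ([]@[hd d, hd d]@(tl d@[last c]))"
    by (rule dup) (use ents_refl[OF assms(1)] in simp, unfold dd1, rule e1)
  then have "ep_equiv UNIV E (d@[last c]) (hd c # d @ [last c])" unfolding dd1 dd2 .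
  then have 2: "ep_equiv UNIV E c (hd c # d @ [last c])" using assms(7) eq_trans by blast
  show ?thesis unfolding E_homotopic_def using assms 2 eq_ep2 ents_refl[OF assms(1)] by auto
qed

lemma EH_conv:
  assumes "E \<in> ents" "E_homotopic UNIV E c d" "hd c = hd d"
  shows "ep_equiv UNIV E c (d@[last c])"
proof -
  have d: "edge_path UNIV E d" "d \<noteq> []" using assms(2) ep_ne unfolding E_homotopic_def by auto
  have e: "edge_path UNIV E (hd c # d @ [last c])" using assms(2) unfolding E_homotopic_def by auto
  have dd1: "[]@[hd d]@(tl d@[last c]) = d@[last c]" using d by simp
  have dd2: "[]@[hd d, hd d]@(tl d@[last c]) = hd c # d@[last c]" using d assms(3) by simp
  have "ep_move UNIV E ([]@[hd d, hd d]@(tl d@[last c])) ([]@[hd d]@(tl d@[last c]))"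
    by (rule move2) (simp add: rs1 ents_refl[OF assms(1)])
  then have "ep_move UNIV E (hd c # d @ [last c]) (d@[last c])" unfolding dd1 dd2 .
  then have "ep_equiv UNIV E (hd c # d @ [last c]) (d@[last c])"
    using eq_move e by blast
  then show ?thesis using assms(2) eq_trans unfolding E_homotopic_def by blast
qed

lemma EH_refl:
  assumes "E \<in> ents" "edge_path UNIV E c"
  shows "E_homotopic UNIV E c c"
proof -
  have cne: "c \<noteq> []" using assms(2) ep_ne by blast
  have cc: "butlast c @ [last c] @ [] = c" "butlast c @ [last c, last c] @ [] = c @ [last c]"
    using cne by simp_all
  have "ep_equiv UNIV E (butlast c @ [last c] @ []) (butlast c @ [last c, last c] @ [])"
    by (rule dup) (use ents_refl[OF assms(1)] in simp, unfold cc(1), rule assms(2))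
  then have "ep_equiv UNIV E c (c @ [last c])" unfolding cc .
  then show ?thesis using EH_crit[OF assms(1) assms(2) assms(2)] ents_refl[OF assms(1)] by blast
qed

lemma EH_pairs:
  assumes "E_homotopic UNIV E c d"
  shows "(last c, last d) \<in> E" "(last d, last c) \<in> E" "edge_path UNIV E c" "edge_path UNIV E d"
proof -
  have d: "edge_path UNIV E d" "d \<noteq> []" using assms ep_ne unfolding E_homotopic_def by auto
  have e: "edge_path UNIV E ((hd c # d) @ [last c])" using assms unfolding E_homotopic_def by auto
  have "edge_path UNIV E ((hd c # d) @ [last c]) \<longleftrightarrow> edge_path UNIV E (hd c # d) \<and> edge_path UNIV E [last c] \<and> rips_simplex UNIV E {last (hd c # d), hd [last c]}"
    by (rule ep_app) simp_all
  then have "rips_simplex UNIV E {last (hd c # d), last c}" using e by simp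
  then show "(last d, last c) \<in> E" using d by (simp add: rs2)
  show "(last c, last d) \<in> E" "edge_path UNIV E c" "edge_path UNIV E d" using assms unfolding E_homotopic_def by auto
qed

lemma EH_sym:
  assumes "E \<in> ents" "E_homotopic UNIV E c d" "hd c = hd d"
  shows "E_homotopic UNIV E d c"
proof -
  note p = EH_pairs[OF assms(2)]
  have 1: "ep_equiv UNIV E c (d@[last c])" using EH_conv assms by blast
  have cne: "c \<noteq> []" "d \<noteq> []" using p ep_ne by blast+
  have ecl: "edge_path UNIV E (c@[last d])" using p cne
    by (simp add: ep_app ep1 rs2 ents_refl[OF assms(1)])
  have 2: "ep_equiv UNIV E ([]@c@[last d]) ([]@(d@[last c])@[last d])"
    by (rule eq_cong[OF 1]) (use ecl in simp)
  have dd: "d = butlast d @ [last d]" using cne by simp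
  have dd3: "butlast d @ [last d, last c, last d] @ [] = d @ [last c] @ [last d]"
    using dd by (metis append.assoc append_Cons append_Nil append_Nil2)
  have e3: "edge_path UNIV E (d @ [last c] @ [last d])" using 2 eq_ep2 by fastforce
  have "ep_equiv UNIV E (butlast d @ [last d, last c, last d] @ []) (butlast d @ [last d] @ [])"
    by (rule bt) (use p ents_refl[OF assms(1)] in \<open>simp add: rs2\<close>, unfold dd3, rule e3)
  then have 3: "ep_equiv UNIV E (d@[last c, last d]) d" using dd by (metis append.assoc append_Cons append_Nil append_Nil2)
  have "ep_equiv UNIV E (c@[last d]) d" using 2 3 eq_trans by fastforce
  then have "ep_equiv UNIV E d (c@[last d])" using eq_sym by blast
  then show ?thesis using EH_crit[OF assms(1) p(4) p(3) _ p(2) p(1)] assms(3) by simp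
qed

lemma EH_mono: assumes h: "E_homotopic Z E c d" and s: "E \<subseteq> E'" shows "E_homotopic Z E' c d"
proof -
  have a: "edge_path Z E c" "edge_path Z E d" "(hd c, hd d) \<in> E" "(last c, last d) \<in> E"
     "edge_path Z E (hd c # d @ [last c])" "ep_equiv Z E c (hd c # d @ [last c])"
    using h unfolding E_homotopic_def by auto
  show ?thesis unfolding E_homotopic_def
    using ep_mono[OF a(1) s] ep_mono[OF a(2) s] ep_mono[OF a(5) s] eq_mono[OF a(6) s] a(3,4) s by auto
qed

lemma EH_resp:
  assumes "E \<in> ents" "E_homotopic UNIV E a b" "hd a = hd b" "ep_equiv UNIV E a a'" "ep_equiv UNIV E b b'"
  shows "E_homotopic UNIV E a' b'"
proof -
  note p = EH_pairs[OF assms(2)]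
  have 1: "ep_equiv UNIV E a (b@[last a])" using EH_conv assms by blast
  have 2: "ep_equiv UNIV E ([]@b@[last a]) ([]@b'@[last a])"
    by (rule eq_cong[OF assms(5)]) (use 1 eq_ep2 in simp)
  have 3: "ep_equiv UNIV E a' (b'@[last a'])" using 1 2 assms(4) eq_sym eq_trans eq_last[OF assms(4)]
    by (metis append_Nil)
  have h: "hd a' = hd b'" using eq_hd[OF assms(4)] eq_hd[OF assms(5)] assms(3) by simp
  have l: "last a' = last a" "last b' = last b" using eq_last[OF assms(4)] eq_last[OF assms(5)] by simp_all
  show ?thesis
    using EH_crit[OF assms(1) eq_ep2[OF assms(4)] eq_ep2[OF assms(5)] h] p(1,2) 3 l by simp
qed

lemma EH_snoc:
  assumes "E \<in> ents" "edge_path UNIV E (q@[b])" "q \<noteq> []"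
  shows "E_homotopic UNIV E (q@[b]) q"
proof -
  have "edge_path UNIV E q" "rips_simplex UNIV E {last q, b}" using assms ep_app[of q "[b]"] by auto
  moreover have "ep_equiv UNIV E (q@[b]) (q@[last (q@[b])])" using assms(2) eq_refl by simp
  moreover have "hd (q@[b]) = hd q" using assms(3) by simp
  ultimately show ?thesis using assms(1,2) EH_crit[of E "q@[b]" q] by (simp add: rs2)
qed

lemma EH_skip:
  assumes "E \<in> ents" "edge_path UNIV E (as@[u,v,w])" "rips_simplex UNIV E {u,v,w}"
  shows "E_homotopic UNIV E (as@[u,v,w]) (as@[u])"
proof -
  have e: "edge_path UNIV E (as@[u])" using assms(2) ep_app_l[of "[u,v,w]" _ _ as] ep_app_l[of "[u]" _ _ as]
    by (auto simp: ep2 ep1)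
  have "ep_equiv UNIV E (as@[u,v,w]@[]) (as@[u,w]@[])"
    by (rule eq_move) (use assms move1 in simp_all)
  then have 1: "ep_equiv UNIV E (as@[u,v,w]) ((as@[u])@[last (as@[u,v,w])])" by simp
  have 2: "hd (as@[u,v,w]) = hd (as@[u])" by (cases as) auto
  have 3: "(last (as@[u,v,w]), last (as@[u])) \<in> E" "(last (as@[u]), last (as@[u,v,w])) \<in> E"
    using assms(3) by (simp_all add: rs3)
  show ?thesis using EH_crit[OF assms(1) assms(2) e 2 3 1] .
qed


lemma gp_mem:
  assumes "gen_path x y g" "E \<in> ents" "d \<in> g E"
  shows "edge_path UNIV E d \<and> hd d = x \<and> last d = y \<and> g E = ep_class UNIV E d"
proof -
  obtain c where c: "edge_path UNIV E c" "hd c = x" "last c = y" "g E = ep_class UNIV E c"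
  proof -
    have "\<forall>E\<in>ents. \<exists>c. edge_path UNIV E c \<and> hd c = x \<and> last c = y \<and> g E = ep_class UNIV E c"
      using assms(1) unfolding gen_path_def by simp
    then show ?thesis using assms(2) that by blast
  qed
  then have "ep_equiv UNIV E c d" using assms(3) class_mem by blast
  then show ?thesis using c eq_ep2[of UNIV E c d] eq_hd[of UNIV E c d] eq_last[of UNIV E c d] class_eq[of UNIV E c d] by simp
qed

lemma gp_ne:
  assumes "gen_path x y g" "E \<in> ents"
  shows "\<exists>d. d \<in> g E"
proof -
  obtain c where c: "edge_path UNIV E c" "g E = ep_class UNIV E c"
  proof -
    have "\<forall>E\<in>ents. \<exists>c. edge_path UNIV E c \<and> hd c = x \<and> last c = y \<and> g E = ep_class UNIV E c"
      using assms(1) unfolding gen_path_def by simp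
    then show ?thesis using assms(2) that by blast
  qed
  have "c \<in> g E" unfolding c(2) class_mem by (rule eq_refl[OF c(1)])
  then show ?thesis by blast
qed

lemma gp_same:
  assumes "gen_path x y g" "E \<in> ents" "d \<in> g E" "d' \<in> g E"
  shows "ep_equiv UNIV E d d'"
  using gp_mem[OF assms(1,2,3)] assms(4) class_mem[of d' UNIV E d] by simp

lemma gp_mono:
  assumes "gen_path x y g" "F \<in> ents" "E \<in> ents" "F \<subseteq> E"
  shows "g F \<subseteq> g E"
proof -
  have "\<forall>E\<in>ents. \<forall>F\<in>ents. F \<subseteq> E \<longrightarrow> g F \<subseteq> g E" using assms(1) unfolding gen_path_def by simp
  then show ?thesis using assms(2-4) by simp
qed

lemma const_gen: "gen_path x0 x0 (const_gp x0)"
  unfolding gen_path_def const_gp_def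
proof (intro conjI ballI allI impI)
  fix E :: "('a \<times> 'a) set" assume "E \<in> ents"
  show "\<exists>c. edge_path UNIV E c \<and> hd c = x0 \<and> last c = x0 \<and>
      (if E \<in> ents then ep_class UNIV E [x0] else {}) = ep_class UNIV E c"
    using \<open>E \<in> ents\<close> by (intro exI[of _ "[x0]"]) (simp add: ep1)
next
  fix E F :: "('a \<times> 'a) set" assume "E \<in> ents" "F \<in> ents" "F \<subseteq> E"
  then show "(if F \<in> ents then ep_class UNIV F [x0] else {}) \<subseteq> (if E \<in> ents then ep_class UNIV E [x0] else {})"
    unfolding ep_class_def by (auto intro: eq_mono[OF _ \<open>F \<subseteq> E\<close>])
qed auto

lemma gp_concat:
  assumes g: "gen_path x y g" and j: "gen_path y z j"
  shows "\<exists>h. gen_path x z h \<and> (\<forall>E\<in>ents. \<forall>c\<in>g E. \<forall>d\<in>j E. h E = ep_class UNIV E (c @ tl d))"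
proof -
  define cE where "cE E = (SOME c. c \<in> g E)" for E
  define dE where "dE E = (SOME d. d \<in> j E)" for E
  define h where "h E = (if E \<in> ents then ep_class UNIV E (cE E @ tl (dE E)) else {})" for E
  have cE: "cE E \<in> g E" if "E \<in> ents" for E
    unfolding cE_def using gp_ne[OF g that] by (meson someI_ex)
  have dE: "dE E \<in> j E" if "E \<in> ents" for E
    unfolding dE_def using gp_ne[OF j that] by (meson someI_ex)
  have key: "ep_equiv UNIV E (c @ tl d) (c' @ tl d')"
    if "E \<in> ents" "c \<in> g E" "c' \<in> g E" "d \<in> j E" "d' \<in> j E" for E c c' d d'
  proof -
    have l: "last c = hd d" using gp_mem[OF g that(1,2)] gp_mem[OF j that(1,4)] by simp
    show ?thesis by (rule concat_cong[OF gp_same[OF g that(1,2,3)] gp_same[OF j that(1,4,5)] l])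
  qed
  have hE: "h E = ep_class UNIV E (c @ tl d)" if "E \<in> ents" "c \<in> g E" "d \<in> j E" for E c d
    unfolding h_def using that(1) class_eq[OF key[OF that(1) cE[OF that(1)] that(2) dE[OF that(1)] that(3)]] by simp
  have "gen_path x z h"
    unfolding gen_path_def
  proof (intro conjI ballI allI impI)
    fix E :: "('a \<times> 'a) set" assume "E \<notin> ents" then show "h E = {}" unfolding h_def by simp
  next
    fix E :: "('a \<times> 'a) set" assume E: "E \<in> ents"
    have c: "edge_path UNIV E (cE E)" "hd (cE E) = x" "last (cE E) = y" using gp_mem[OF g E cE[OF E]] by auto
    have d: "edge_path UNIV E (dE E)" "hd (dE E) = y" "last (dE E) = z" using gp_mem[OF j E dE[OF E]] by auto
    have e: "edge_path UNIV E (cE E @ tl (dE E))" using ep_concat[OF c(1) d(1)] c(3) d(2) by simp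
    have "hd (cE E @ tl (dE E)) = x" using c ep_ne[OF c(1)] by simp
    moreover have "last (cE E @ tl (dE E)) = z"
    proof (cases "tl (dE E) = []")
      case True
      have "z = y" using True d ep_ne[OF d(1)] by (cases "dE E") auto
      then show ?thesis using True c by simp
    next
      case False then show ?thesis using d by (simp add: last_tl)
    qed
    ultimately show "\<exists>c. edge_path UNIV E c \<and> hd c = x \<and> last c = z \<and> h E = ep_class UNIV E c"
      using e E unfolding h_def by auto
  next
    fix E F :: "('a \<times> 'a) set" assume E: "E \<in> ents" and F: "F \<in> ents" and s: "F \<subseteq> E"
    show "h F \<subseteq> h E"
    proof
      fix e assume "e \<in> h F"
      then have 1: "ep_equiv UNIV F (cE F @ tl (dE F)) e" using F unfolding h_def by (simp add: class_mem)
      have 2: "ep_equiv UNIV E (cE E @ tl (dE E)) (cE F @ tl (dE F))"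
        by (rule key[OF E cE[OF E] subsetD[OF gp_mono[OF g F E s] cE[OF F]] dE[OF E] subsetD[OF gp_mono[OF j F E s] dE[OF F]]])
      show "e \<in> h E" using eq_trans[OF 2 eq_mono[OF 1 s]] E unfolding h_def by (simp add: class_mem)
    qed
  qed
  then show ?thesis using hE by auto
qed


lemma GP_star_mono:
  assumes "F' \<in> ents" "F \<in> ents" "F' \<subseteq> F"
  shows "GP_star x0 F' \<subseteq> GP_star x0 F"
proof
  fix p assume "p \<in> GP_star x0 F'"
  then obtain g h where p: "p = (g,h)" "g \<in> GP x0" "h \<in> GP x0" and
    cd: "\<exists>c\<in>g F'. \<exists>d\<in>h F'. E_homotopic UNIV F' c d"
    unfolding GP_star_def by auto
  obtain c d where c: "c \<in> g F'" "d \<in> h F'" "E_homotopic UNIV F' c d" using cd by blast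
  obtain y where y: "gen_path x0 y g" using p(2) unfolding GP_def by auto
  obtain z where z: "gen_path x0 z h" using p(3) unfolding GP_def by auto
  have "c \<in> g F" "d \<in> h F" using gp_mono[OF y assms] gp_mono[OF z assms] c by auto
  moreover have "E_homotopic UNIV F c d" using EH_mono[OF c(3) assms(3)] .
  ultimately show "p \<in> GP_star x0 F" unfolding GP_star_def using p by blast
qed

locale setting =
  fixes x0 :: "'a::uniform_space" and F F' :: "('a \<times> 'a) set"
  assumes F: "F \<in> ents" and F': "F' \<in> ents" and sub: "F' \<subseteq> F"
    and join: "\<And>x y. (x,y) \<in> F' \<Longrightarrow> \<exists>g. gen_path x y g \<and> short_gen_path F x y g"
begin

definition pth :: "'a list \<Rightarrow> bool" where
  "pth q \<longleftrightarrow> edge_path UNIV F' q \<and> hd q = x0"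

lemma psi_ex: "edge_path UNIV F' p \<Longrightarrow> hd p = x0 \<Longrightarrow> \<exists>g. gen_path x0 (last p) g \<and> g F = ep_class UNIV F p"
proof (induction p rule: rev_induct)
  case Nil then show ?case using ep_ne by blast
next
  case (snoc b q)
  show ?case
  proof (cases "q = []")
    case True
    then have "b = x0" using snoc.prems by simp
    then show ?thesis using True const_gen[of x0] F unfolding const_gp_def
      by (intro exI[of _ "const_gp x0"]) (simp add: const_gp_def)
  next
    case False
    have e: "edge_path UNIV F' q" "rips_simplex UNIV F' {last q, b}"
      using snoc.prems(1) ep_app[OF False, of "[b]"] by auto
    have hq: "hd q = x0" using snoc.prems(2) False by simp
    obtain g where g: "gen_path x0 (last q) g" "g F = ep_class UNIV F q" using snoc.IH[OF e(1) hq] by blast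
    have "(last q, b) \<in> F'" using e(2) by (simp add: rs2)
    then obtain j where j: "gen_path (last q) b j" "[last q, b] \<in> j F"
      using join unfolding short_gen_path_def by blast
    obtain h where h: "gen_path x0 b h" "\<forall>E\<in>ents. \<forall>c\<in>g E. \<forall>d\<in>j E. h E = ep_class UNIV E (c @ tl d)"
      using gp_concat[OF g(1) j(1)] by blast
    have "q \<in> g F" unfolding g(2) class_mem by (rule eq_refl[OF ep_mono[OF e(1) sub]])
    then have "h F = ep_class UNIV F (q @ tl [last q, b])" using h(2) F j(2) by blast
    then show ?thesis using h(1) by (intro exI[of _ h]) simp
  qed
qed

definition Psi :: "'a list \<Rightarrow> 'a gpath" where
  "Psi p = (SOME g. gen_path x0 (last p) g \<and> g F = ep_class UNIV F p)"

definition repr :: "'a gpath \<Rightarrow> 'a list \<Rightarrow> bool" where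
  "repr g q \<longleftrightarrow> g \<in> GP x0 \<and> pth q \<and> q \<in> g F"

lemma Psi_gp: "pth q \<Longrightarrow> gen_path x0 (last q) (Psi q) \<and> Psi q F = ep_class UNIV F q"
proof -
  assume q: "pth q"
  have "\<exists>g. gen_path x0 (last q) g \<and> g F = ep_class UNIV F q" using psi_ex q unfolding pth_def by blast
  then show ?thesis unfolding Psi_def by (rule someI_ex)
qed

lemma Psi_repr: "pth q \<Longrightarrow> repr (Psi q) q"
proof -
  assume q: "pth q"
  have "edge_path UNIV F q" using q ep_mono sub unfolding pth_def by blast
  then have "q \<in> Psi q F" using Psi_gp[OF q] eq_refl class_mem by metis
  then show ?thesis using q Psi_gp[OF q] unfolding repr_def GP_def by blast
qed

lemma Psi_inv: "pth q \<Longrightarrow> ep_equiv UNIV F' q q' \<Longrightarrow> Psi q = Psi q'"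
proof -
  assume q: "pth q" and e: "ep_equiv UNIV F' q q'"
  have "ep_class UNIV F q = ep_class UNIV F q'" using class_eq eq_mono[OF e sub] by blast
  moreover have "last q = last q'" using eq_last[OF e] .
  ultimately show ?thesis unfolding Psi_def by simp
qed

lemma pth_eq: "pth q \<Longrightarrow> ep_equiv UNIV F' q q' \<Longrightarrow> pth q'"
  unfolding pth_def using eq_ep2 eq_hd by metis

lemma pth_prefix: "pth (xs@ys) \<Longrightarrow> xs \<noteq> [] \<Longrightarrow> pth xs"
  unfolding pth_def by (cases "ys = []") (auto simp: ep_app)

lemma EHF_sym: "E_homotopic UNIV F' p q \<Longrightarrow> pth p \<Longrightarrow> pth q \<Longrightarrow> E_homotopic UNIV F' q p"
  using EH_sym[OF F'] unfolding pth_def by metis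

lemma close: "repr g p \<Longrightarrow> repr h q \<Longrightarrow> E_homotopic UNIV F' p q \<Longrightarrow> (g,h) \<in> GP_star x0 F \<and> (h,g) \<in> GP_star x0 F"
proof -
  assume g: "repr g p" and h: "repr h q" and e: "E_homotopic UNIV F' p q"
  have e2: "E_homotopic UNIV F' q p" using EHF_sym e g h unfolding repr_def by blast
  show ?thesis using g h EH_mono[OF e sub] EH_mono[OF e2 sub] unfolding repr_def GP_star_def by blast
qed

lemma close_refl: "repr g p \<Longrightarrow> (g,g) \<in> GP_star x0 F"
  using close EH_refl[OF F'] unfolding repr_def pth_def by blast

lemma edge2: "repr g p \<Longrightarrow> repr h q \<Longrightarrow> E_homotopic UNIV F' p q \<Longrightarrow> rips_simplex (GP x0) (GP_star x0 F) {g,h}"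
  using close[of g p h q] close_refl[of g p] close_refl[of h q] unfolding rs2 repr_def by blast

lemma tri: "repr a p \<Longrightarrow> repr b q \<Longrightarrow> repr c r \<Longrightarrow> E_homotopic UNIV F' q p \<Longrightarrow> E_homotopic UNIV F' r p \<Longrightarrow> E_homotopic UNIV F' r q
   \<Longrightarrow> rips_simplex (GP x0) (GP_star x0 F) {a,b,c}"
  using close[of b q a p] close[of c r a p] close[of c r b q] close_refl[of a p] close_refl[of b q] close_refl[of c r]
  unfolding rs3 repr_def by blast

definition sig :: "'a list \<Rightarrow> 'a gpath list" where
  "sig p = map (\<lambda>j. Psi (take j p)) [1..<Suc (length p)]"

lemma sig_nil: "sig [] = []" unfolding sig_def by simp

lemma sig_snoc: "sig (p@[b]) = sig p @ [Psi (p@[b])]"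
proof -
  have "[1..<Suc (length (p@[b]))] = [1..<Suc (length p)] @ [Suc (length p)]" by simp
  moreover have "map (\<lambda>j. Psi (take j (p@[b]))) [1..<Suc (length p)] = map (\<lambda>j. Psi (take j p)) [1..<Suc (length p)]"
    by (rule map_cong) auto
  ultimately show ?thesis unfolding sig_def by simp
qed

lemma sig_ne: "q \<noteq> [] \<Longrightarrow> sig q = sig (butlast q) @ [Psi q]"
  using sig_snoc[of "butlast q" "last q"] by simp

end


context setting
begin

abbreviation "S \<equiv> GP_star x0 F"

lemma sig_ep: "pth q \<Longrightarrow> edge_path (GP x0) S (sig q)"
proof (induction q rule: rev_induct)
  case Nil then show ?case unfolding pth_def using ep_ne by blast
next
  case (snoc b q)
  show ?case
  proof (cases "q = []")
    case True
    have "Psi [b] \<in> GP x0" using Psi_repr[OF snoc.prems] True unfolding repr_def by simp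
    then show ?thesis using True sig_snoc[of "[]" b] by (simp add: sig_nil ep1)
  next
    case False
    have pq: "pth q" using pth_prefix snoc.prems False by blast
    have r1: "repr (Psi q) q" "repr (Psi (q@[b])) (q@[b])" using Psi_repr pq snoc.prems by auto
    have eh: "E_homotopic UNIV F' (q@[b]) q" using EH_snoc[OF F' _ False] snoc.prems unfolding pth_def by blast
    have s: "rips_simplex (GP x0) S {Psi (q@[b]), Psi q}" using edge2[OF r1(2) r1(1) eh] .
    have sn: "sig q \<noteq> []" "last (sig q) = Psi q" using sig_ne[OF False] by auto
    have "edge_path (GP x0) S (sig q @ [Psi (q@[b])])"
      using ep_app[OF sn(1), of "[Psi (q@[b])]"] snoc.IH[OF pq] s sn(2) r1(2)
      unfolding repr_def by (simp add: ep1 insert_commute)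
    then show ?thesis by (simp add: sig_snoc)
  qed
qed

lemma sig_split:
  assumes P: "P \<noteq> []" and hyp: "\<And>bs'. pth (P@bs') \<Longrightarrow> Psi (P@bs') = Psi (Q@bs')"
  shows "pth (P@bs) \<Longrightarrow> \<exists>T. sig (P@bs) = sig P @ T \<and> sig (Q@bs) = sig Q @ T"
proof (induction bs rule: rev_induct)
  case Nil then show ?case by simp
next
  case (snoc b bs)
  have "pth (P@bs)" using pth_prefix[of "P@bs" "[b]"] snoc.prems P by simp
  then obtain T where T: "sig (P@bs) = sig P @ T" "sig (Q@bs) = sig Q @ T" using snoc.IH by blast
  have 1: "sig (P@bs@[b]) = sig (P@bs) @ [Psi (P@bs@[b])]" using sig_snoc[of "P@bs" b] by simp
  have 2: "sig (Q@bs@[b]) = sig (Q@bs) @ [Psi (Q@bs@[b])]" using sig_snoc[of "Q@bs" b] by simp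
  have 3: "Psi (P@bs@[b]) = Psi (Q@bs@[b])" using hyp[of "bs@[b]"] snoc.prems by simp
  show ?case using 1 2 3 T by (intro exI[of _ "T @ [Psi (P@bs@[b])]"]) simp
qed

lemma sig_move:
  assumes p: "pth p" and m: "ep_move UNIV F' p p'"
  shows "ep_equiv (GP x0) S (sig p) (sig p')"
proof -
  have ep: "edge_path (GP x0) S (sig p)" using sig_ep[OF p] .
  from m consider
    (a) as u v w bs where "p = as@[u,v,w]@bs" "p' = as@[u,w]@bs" "rips_simplex UNIV F' {u,v,w}"
  | (b) as u bs where "p = as@[u,u]@bs" "p' = as@[u]@bs" "rips_simplex UNIV F' {u}"
    unfolding ep_move_def by blast
  then show ?thesis
  proof cases
    case a
    let ?P = "as@[u,v,w]" and ?Q = "as@[u,w]"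
    have hyp: "Psi (?P@bs') = Psi (?Q@bs')" if "pth (?P@bs')" for bs'
    proof -
      have "ep_move UNIV F' (as@[u,v,w]@bs') (as@[u,w]@bs')" by (rule move1[OF a(3)])
      moreover have "edge_path UNIV F' (as@[u,v,w]@bs')" using that unfolding pth_def by simp
      ultimately have "ep_equiv UNIV F' (as@[u,v,w]@bs') (as@[u,w]@bs')" using eq_move by blast
      then show ?thesis using Psi_inv that by simp
    qed
    have pP: "pth (?P@bs)" using p a(1) by simp
    obtain T where T: "sig (?P@bs) = sig ?P @ T" "sig (?Q@bs) = sig ?Q @ T"
      using sig_split[of ?P ?Q bs] hyp pP by auto
    have pP0: "pth ?P" using pth_prefix[of ?P bs] pP by simp
    have p1: "pth (as@[u])" using pth_prefix[of "as@[u]" "[v,w]"] pP0 by simp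
    have p2: "pth (as@[u,v])" using pth_prefix[of "as@[u,v]" "[w]"] pP0 by simp
    have s1: "sig (as@[u,v]) = sig (as@[u]) @ [Psi (as@[u,v])]" using sig_snoc[of "as@[u]" v] by simp
    have s2: "sig ?P = sig (as@[u,v]) @ [Psi ?P]" using sig_snoc[of "as@[u,v]" w] by simp
    have s3: "sig ?Q = sig (as@[u]) @ [Psi ?Q]" using sig_snoc[of "as@[u]" w] by simp
    have s0: "sig (as@[u]) = sig as @ [Psi (as@[u])]" using sig_snoc[of as u] by simp
    have PQ: "Psi ?Q = Psi ?P" using hyp[of "[]"] pP0 by simp
    have e1: "E_homotopic UNIV F' (as@[u,v]) (as@[u])"
      using EH_snoc[OF F', of "as@[u]" v] p2 unfolding pth_def by simp
    have e2: "E_homotopic UNIV F' ?P (as@[u])"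
      using EH_skip[OF F' _ a(3)] pP0 unfolding pth_def by simp
    have e3: "E_homotopic UNIV F' ?P (as@[u,v])"
      using EH_snoc[OF F', of "as@[u,v]" w] pP0 unfolding pth_def by simp
    have simp3: "rips_simplex (GP x0) S {Psi (as@[u]), Psi (as@[u,v]), Psi ?P}"
      by (rule tri[OF Psi_repr[OF p1] Psi_repr[OF p2] Psi_repr[OF pP0] e1 e2 e3])
    have eqs: "sig p = sig as @ [Psi (as@[u]), Psi (as@[u,v]), Psi ?P] @ T"
      "sig p' = sig as @ [Psi (as@[u]), Psi ?P] @ T"
      using a(1,2) T s0 s1 s2 s3 PQ by simp_all
    have "ep_move (GP x0) S (sig p) (sig p')" unfolding eqs by (rule move1[OF simp3])
    then show ?thesis using eq_move ep by blast
  next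
    case b
    let ?P = "as@[u,u]" and ?Q = "as@[u]"
    have hyp: "Psi (?P@bs') = Psi (?Q@bs')" if "pth (?P@bs')" for bs'
    proof -
      have "ep_move UNIV F' (as@[u,u]@bs') (as@[u]@bs')" by (rule move2[OF b(3)])
      moreover have "edge_path UNIV F' (as@[u,u]@bs')" using that unfolding pth_def by simp
      ultimately have "ep_equiv UNIV F' (as@[u,u]@bs') (as@[u]@bs')" using eq_move by blast
      then show ?thesis using Psi_inv that by simp
    qed
    have pP: "pth (?P@bs)" using p b(1) by simp
    obtain T where T: "sig (?P@bs) = sig ?P @ T" "sig (?Q@bs) = sig ?Q @ T"
      using sig_split[of ?P ?Q bs] hyp pP by auto
    have pP0: "pth ?P" using pth_prefix[of ?P bs] pP by simp
    have p1: "pth (as@[u])" using pth_prefix[of "as@[u]" "[u]"] pP0 by simp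
    have s2: "sig ?P = sig ?Q @ [Psi ?P]" using sig_snoc[of "as@[u]" u] by simp
    have s0: "sig ?Q = sig as @ [Psi ?Q]" using sig_snoc[of as u] by simp
    have PQ: "Psi ?P = Psi ?Q" using hyp[of "[]"] pP0 by simp
    have r: "repr (Psi ?Q) ?Q" using Psi_repr[OF p1] .
    have simp1: "rips_simplex (GP x0) S {Psi ?Q}"
      using r close_refl[OF r] unfolding rs1 repr_def by simp
    have eqs: "sig p = sig as @ [Psi ?Q, Psi ?Q] @ T" "sig p' = sig as @ [Psi ?Q] @ T"
      using b(1,2) T s0 s2 PQ by simp_all
    have "ep_move (GP x0) S (sig p) (sig p')" unfolding eqs by (rule move2[OF simp1])
    then show ?thesis using eq_move ep by blast
  qed
qed

lemma sig_inv:
  assumes p: "pth p" and e: "ep_equiv UNIV F' p p'"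
  shows "ep_equiv (GP x0) S (sig p) (sig p')"
proof -
  have rt: "(R UNIV F')\<^sup>*\<^sup>* p p'" using e unfolding ep_equiv_def by blast
  have "pth p2 \<and> ep_equiv (GP x0) S (sig p) (sig p2)" if "(R UNIV F')\<^sup>*\<^sup>* p p2" for p2
    using that
  proof (induction rule: rtranclp_induct)
    case base then show ?case using p eq_refl sig_ep by blast
  next
    case (step y z)
    have py: "pth y" and ey: "ep_equiv (GP x0) S (sig p) (sig y)" using step.IH by auto
    show ?case
    proof (cases "ep_move UNIV F' y z")
      case True
      have pz: "pth z" using py move_ep[OF True] move_hdlast[OF True] unfolding pth_def by simp
      then show ?thesis using eq_trans[OF ey sig_move[OF py True]] by blast
    next
      case False
      then have m: "ep_move UNIV F' z y" using step.hyps(2) by blast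
      have pz: "pth z" using py move_ep[OF m] move_hdlast[OF m] unfolding pth_def by simp
      then show ?thesis using eq_trans[OF ey eq_sym[OF sig_move[OF pz m]]] by blast
    qed
  qed
  then show ?thesis using rt by blast
qed

end


context setting
begin

definition cg :: "'a gpath \<Rightarrow> 'a list" where
  "cg g = (SOME c. c \<in> g F')"

lemma cg: assumes g: "g \<in> GP x0" shows "cg g \<in> g F'" "repr g (cg g)"
proof -
  obtain y where y: "gen_path x0 y g" using g unfolding GP_def by auto
  have "\<exists>c. c \<in> g F'" using gp_ne[OF y F'] .
  then show c: "cg g \<in> g F'" unfolding cg_def by (rule someI_ex)
  have "edge_path UNIV F' (cg g) \<and> hd (cg g) = x0" using gp_mem[OF y F' c] by simp
  moreover have "cg g \<in> g F" using gp_mono[OF y F' F sub] c by blast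
  ultimately show "repr g (cg g)" unfolding repr_def pth_def using g by simp
qed

lemma cg_pth: "g \<in> GP x0 \<Longrightarrow> pth (cg g)"
  using cg unfolding repr_def by blast

definition tau :: "'a gpath \<Rightarrow> 'a gpath list" where
  "tau g = sig (cg g) @ [g]"

lemma sig_last: "pth q \<Longrightarrow> sig q = sig (butlast q) @ [Psi q]"
  using sig_ne ep_ne unfolding pth_def by blast

lemma tau_ep: assumes g: "g \<in> GP x0" shows "edge_path (GP x0) S (tau g)"
proof -
  have p: "pth (cg g)" using cg_pth[OF g] .
  have r: "repr (Psi (cg g)) (cg g)" "repr g (cg g)" using Psi_repr[OF p] cg[OF g] by auto
  have e: "E_homotopic UNIV F' (cg g) (cg g)" using EH_refl[OF F'] p unfolding pth_def by blast
  have s: "rips_simplex (GP x0) S {Psi (cg g), g}" using edge2[OF r e] .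
  have sl: "sig (cg g) = sig (butlast (cg g)) @ [Psi (cg g)]" using sig_last[OF p] .
  have "edge_path (GP x0) S (sig (cg g) @ [g])"
    using ep_app[of "sig (cg g)" "[g]"] sig_ep[OF p] s g sl by (simp add: ep1)
  then show ?thesis unfolding tau_def .
qed

lemma step:
  assumes gh: "(g,h) \<in> GP_star x0 F'" and ep: "edge_path (GP x0) S (sig (cg g) @ [g,h])"
  shows "ep_equiv (GP x0) S (sig (cg g) @ [g,h]) (tau h)"
proof -
  obtain a b where g: "g \<in> GP x0" and h: "h \<in> GP x0" and ab: "a \<in> g F'" "b \<in> h F'" "E_homotopic UNIV F' a b"
    using gh unfolding GP_star_def by blast
  obtain y where y: "gen_path x0 y g" using g unfolding GP_def by auto
  obtain z where z: "gen_path x0 z h" using h unfolding GP_def by auto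
  have ea: "ep_equiv UNIV F' a (cg g)" using gp_same[OF y F' ab(1) cg(1)[OF g]] .
  have eb: "ep_equiv UNIV F' b (cg h)" using gp_same[OF z F' ab(2) cg(1)[OF h]] .
  have hab: "hd a = hd b" using gp_mem[OF y F' ab(1)] gp_mem[OF z F' ab(2)] by simp
  have pg: "pth (cg g)" and ph: "pth (cg h)" using cg_pth g h by auto
  have E: "E_homotopic UNIV F' (cg g) (cg h)" using EH_resp[OF F' ab(3) hab ea eb] .
  have E': "E_homotopic UNIV F' (cg h) (cg g)" using EHF_sym[OF E pg ph] .
  have Eg: "E_homotopic UNIV F' (cg g) (cg g)" using EH_refl[OF F'] pg unfolding pth_def by blast
  have Eh: "E_homotopic UNIV F' (cg h) (cg h)" using EH_refl[OF F'] ph unfolding pth_def by blast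
  have hgh: "hd (cg g) = hd (cg h)" using pg ph unfolding pth_def by simp
  define yy where "yy = last (cg g)"
  have c1: "ep_equiv UNIV F' (cg g) (cg h @ [yy])" using EH_conv[OF F' E hgh] unfolding yy_def .
  have PsiE: "Psi (cg g) = Psi (cg h @ [yy])" using Psi_inv[OF pg c1] .
  have c2: "ep_equiv (GP x0) S (sig (cg g)) (sig (cg h) @ [Psi (cg g)])"
    using sig_inv[OF pg c1] PsiE sig_snoc by simp
  define A where "A = sig (butlast (cg h))"
  define Gg where "Gg = Psi (cg g)"
  define Gh where "Gh = Psi (cg h)"
  have sh: "sig (cg h) = A @ [Gh]" unfolding A_def Gh_def using sig_last[OF ph] .
  have c3: "ep_equiv (GP x0) S ([] @ sig (cg g) @ [g,h]) ([] @ (A @ [Gh, Gg]) @ [g,h])"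
    using eq_cong[OF c2, of "[]" "[g,h]"] ep sh unfolding Gg_def by simp
  have c3': "ep_equiv (GP x0) S (sig (cg g) @ [g,h]) (A @ [Gh, Gg, g, h])" using c3 by simp
  have rGg: "repr Gg (cg g)" and rGh: "repr Gh (cg h)" unfolding Gg_def Gh_def using Psi_repr pg ph by auto
  have rg: "repr g (cg g)" and rh: "repr h (cg h)" using cg g h by auto
  have t1: "rips_simplex (GP x0) S {Gg, g, h}" by (rule tri[OF rGg rg rh Eg E' E'])
  have t2: "rips_simplex (GP x0) S {Gh, Gg, h}" by (rule tri[OF rGh rGg rh E Eh E'])
  have m1: "ep_move (GP x0) S ((A @ [Gh]) @ [Gg, g, h] @ []) ((A @ [Gh]) @ [Gg, h] @ [])"
    by (rule move1[OF t1])
  have m2: "ep_move (GP x0) S (A @ [Gh, Gg, h] @ []) (A @ [Gh, h] @ [])"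
    by (rule move1[OF t2])
  have c4: "ep_equiv (GP x0) S (A @ [Gh, Gg, g, h]) (A @ [Gh, Gg, h])"
    using eq_move[OF _ m1] eq_ep2[OF c3] by simp
  have c5: "ep_equiv (GP x0) S (A @ [Gh, Gg, h]) (A @ [Gh, h])"
    using eq_move[OF _ m2] eq_ep2[OF c4] by simp
  have "tau h = A @ [Gh, h]" unfolding tau_def sh by simp
  then show ?thesis using eq_trans[OF eq_trans[OF c3' c4] c5] by simp
qed

end


context setting
begin

lemma main_loop:
  assumes L: "edge_path (GP x0) (GP_star x0 F') L" and hL: "hd L = const_gp x0" and lL: "last L = const_gp x0"
  shows "ep_equiv (GP x0) S L [const_gp x0]"
proof -
  have VS: "GP_star x0 F' \<subseteq> S" using GP_star_mono[OF F' F sub] .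
  have LS: "edge_path (GP x0) S L" using ep_mono[OF L VS] .
  have Lne: "L \<noteq> []" using ep_ne[OF L] .
  define g0 where "g0 = hd L"
  have g0n: "L ! 0 = g0" unfolding g0_def using Lne by (simp add: hd_conv_nth)
  have setL: "set L \<subseteq> GP x0" using L unfolding edge_path_def by auto
  have g0: "g0 \<in> GP x0" using setL Lne unfolding g0_def by auto
  define c0 where "c0 = cg g0"
  have claim: "k < length L \<Longrightarrow> ep_equiv (GP x0) S (sig c0 @ take (Suc k) L) (tau (L!k))" for k
  proof (induction k)
    case 0
    have "take (Suc 0) L = [g0]" using Lne g0n by (cases L) auto
    then show ?case using eq_refl[OF tau_ep[OF g0]] g0n unfolding tau_def c0_def by simp
  next
    case (Suc k)
    have k: "k < length L" using Suc.prems by simp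
    note IH = Suc.IH[OF k]
    have rv: "rips_simplex (GP x0) (GP_star x0 F') {L!k, L!Suc k}" using L Suc.prems unfolding edge_path_def by blast
    then have gh: "(L!k, L!Suc k) \<in> GP_star x0 F'" by (simp add: rs2)
    have rs: "rips_simplex (GP x0) S {L!k, L!Suc k}" using rs_mono[OF rv VS] .
    have tk: "take (Suc k) L = take k L @ [L!k]" using k by (simp add: take_Suc_conv_app_nth)
    have tk2: "take (Suc (Suc k)) L = take (Suc k) L @ [L!Suc k]" using Suc.prems by (simp add: take_Suc_conv_app_nth)
    have lst: "last (sig c0 @ take (Suc k) L) = L!k" using tk by simp
    have e1: "edge_path (GP x0) S (sig c0 @ take (Suc k) L)" using eq_ep1[OF IH] .
    have e2: "edge_path (GP x0) S ((sig c0 @ take (Suc k) L) @ [L!Suc k])"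
      using ep_app[of "sig c0 @ take (Suc k) L" "[L!Suc k]"] e1 lst rs tk by (simp add: rs2 ep1)
    have c1: "ep_equiv (GP x0) S ([] @ (sig c0 @ take (Suc k) L) @ [L!Suc k]) ([] @ tau (L!k) @ [L!Suc k])"
      by (rule eq_cong[OF IH]) (use e2 in simp)
    then have c1': "ep_equiv (GP x0) S (sig c0 @ take (Suc (Suc k)) L) (sig (cg (L!k)) @ [L!k, L!Suc k])"
      unfolding tk2 tau_def by simp
    have c2: "ep_equiv (GP x0) S (sig (cg (L!k)) @ [L!k, L!Suc k]) (tau (L!Suc k))"
      by (rule step[OF gh eq_ep2[OF c1']])
    show ?case using eq_trans[OF c1' c2] .
  qed
  have lastn: "L ! (length L - 1) = g0" using lL hL Lne unfolding g0_def by (simp add: last_conv_nth)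
  have X: "ep_equiv (GP x0) S (sig c0 @ L) (sig c0 @ [g0])"
    using claim[of "length L - 1"] Lne lastn unfolding tau_def c0_def by simp
  have "c0 \<in> g0 F'" using cg(1)[OF g0] unfolding c0_def .
  then have ec: "ep_equiv UNIV F' [x0] c0" using F' hL unfolding g0_def const_gp_def by (simp add: class_mem)
  have px: "pth [x0]" unfolding pth_def by (simp add: ep1)
  have pc0: "pth c0" using cg_pth[OF g0] unfolding c0_def .
  define P where "P = Psi [x0]"
  have sx: "sig [x0] = [P]" using sig_snoc[of "[]" x0] unfolding P_def by (simp add: sig_nil)
  have Y: "ep_equiv (GP x0) S [P] (sig c0)" using sig_inv[OF px ec] sx by simp
  have PP: "Psi c0 = P" using Psi_inv[OF px ec] unfolding P_def by simp
  have sl: "sig c0 = sig (butlast c0) @ [P]" using sig_last[OF pc0] PP by simp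
  have t0: "edge_path (GP x0) S (sig c0 @ [g0])" using tau_ep[OF g0] unfolding tau_def c0_def .
  have rP: "rips_simplex (GP x0) S {P, g0}"
    using ep_app[of "sig c0" "[g0]"] t0 sl by simp
  have Pg: "P \<in> GP x0" using rP by (simp add: rs2)
  have hL0: "hd L = g0" unfolding g0_def ..
  have ePL: "edge_path (GP x0) S ([P] @ L)" using ep_app[of "[P]" L] Lne LS rP hL0 Pg by (simp add: ep1)
  have e1: "ep_equiv (GP x0) S ([] @ [P] @ L) ([] @ sig c0 @ L)" by (rule eq_cong[OF Y]) (use ePL in simp)
  have ePg: "edge_path (GP x0) S ([] @ [P] @ [g0])" using rP Pg g0 by (simp add: ep1 ep2)
  have e2: "ep_equiv (GP x0) S ([] @ [P] @ [g0]) ([] @ sig c0 @ [g0])" by (rule eq_cong[OF Y ePg])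
  have e3: "ep_equiv (GP x0) S (P # L) [P, g0]"
    using eq_trans[OF eq_trans[OF e1[simplified] X] eq_sym[OF e2[simplified]]] .
  have rgP: "rips_simplex (GP x0) S {g0, P}" using rP by (simp add: insert_commute)
  have eg: "edge_path (GP x0) S (g0 # P # L)" using ep2[of "GP x0" S g0 P L] g0 rgP eq_ep1[OF e3] by simp
  have e4: "ep_equiv (GP x0) S ([g0] @ (P # L) @ []) ([g0] @ [P, g0] @ [])"
    by (rule eq_cong[OF e3]) (use eg in simp)
  have e5: "ep_equiv (GP x0) S [g0, P, g0] [g0]" using bt0[OF rgP] .
  have Leq: "L = g0 # tl L" using Lne hL0 by (cases L) auto
  have eg': "edge_path (GP x0) S ([] @ [g0, P, g0] @ tl L)" using eg Leq by (metis append_Cons append_Nil)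
  have e6: "ep_equiv (GP x0) S ([] @ [g0, P, g0] @ tl L) ([] @ [g0] @ tl L)" by (rule bt[OF rgP eg'])
  have e6': "ep_equiv (GP x0) S (g0 # P # L) L" using e6 Leq by (metis append_Cons append_Nil)
  have "ep_equiv (GP x0) S L [g0]" using eq_trans[OF eq_trans[OF eq_sym[OF e6'] e4[simplified]] e5] .
  then show ?thesis using hL0 hL by simp
qed

end

theorem mainTheorem11:
  fixes x0 :: "'a::uniform_space"
  assumes "uniformly_joinable TYPE('a)"
  shows "pro_pi1_trivial (GP x0) (GP_ents x0) (const_gp x0)"
  unfolding pro_pi1_trivial_def
proof
  fix W assume "W \<in> GP_ents x0"
  then obtain F where FF: "F \<in> ents" "GP_star x0 F \<subseteq> W" unfolding GP_ents_def by blast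
  obtain Fb where Fb: "Fb \<in> ents" "\<forall>x y. (x, y) \<in> Fb \<longrightarrow> (\<exists>g. gen_path x y g \<and> short_gen_path F x y g)"
    using assms FF(1) unfolding uniformly_joinable_def by blast
  define F' where "F' = F \<inter> Fb"
  interpret setting x0 F F'
  proof
    show "F \<in> ents" by (rule FF(1))
    show "F' \<in> ents" unfolding F'_def by (rule ents_int[OF FF(1) Fb(1)])
    show "F' \<subseteq> F" unfolding F'_def by blast
    fix x y assume "(x,y) \<in> F'"
    then show "\<exists>g. gen_path x y g \<and> short_gen_path F x y g" using Fb(2) unfolding F'_def by blast
  qed
  have V: "GP_star x0 F' \<in> GP_ents x0" unfolding GP_ents_def using F' unfolding GP_star_def by blast
  have VW: "GP_star x0 F' \<subseteq> W" using GP_star_mono[OF F' FF(1) sub] FF(2) by blast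
  have SW: "GP_star x0 F \<subseteq> W" using FF(2) .
  show "\<exists>V\<in>GP_ents x0. V \<subseteq> W \<and> (\<forall>c. edge_path (GP x0) V c \<and> hd c = const_gp x0 \<and> last c = const_gp x0 \<longrightarrow>
          ep_equiv (GP x0) W c [const_gp x0])"
  proof (intro bexI[OF _ V] conjI allI impI VW)
    fix c assume "edge_path (GP x0) (GP_star x0 F') c \<and> hd c = const_gp x0 \<and> last c = const_gp x0"
    then show "ep_equiv (GP x0) W c [const_gp x0]" using main_loop eq_mono[OF _ SW] by blast
  qed
qed

end
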